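(* Let $A=(a_{ij})_{1\le i,j\le n}$ be a complex Nekrasov matrix and let $\epsilon_1,\dots,\epsilon_n$ be real numbers satisfying either the conditions (C1) or the conditions (C2) below. Define $w_i:=\sum_{j=1}^{i-1}|a_{ij}|\frac{\epsilon_j}{|a_{jj}|}$ and $p_i:=\sum_{j=i+1}^{n}|a_{ij}|\frac{|a_{jj}|-h_j(A)-\epsilon_j}{|a_{jj}|}$ for $i\in N=\{1,\dots,n\}$. Then $\epsilon_i-w_i+p_i>0$ for all $i$ and $$\|A^{-1}\|_\infty\le \frac{\max_{i\in N}\frac{h_i(A)+\epsilon_i}{|a_{ii}|}}{\min_{i\in N}(\epsilon_i-w_i+p_i)}.$$
   Context: For a complex $n\times n$ matrix $A=(a_{ij})$ with $a_{ii}\ne 0$ for all $i$, define recursively $h_1(A):=\sum_{j\ne 1}|a_{1j}|$ and $h_i(A):=\sum_{j=1}^{i-1}|a_{ij}|\frac{h_j(A)}{|a_{jj}|}+\sum_{j=i+1}^{n}|a_{ij}|$ for $i=2,\dots,n$. $A$ is a Nekrasov matrix if $|a_{ii}|>h_i(A)$ for all $i\in\{1,\dots,n\}$. $\|\cdot\|_\infty$ is the matrix norm induced by the vector max-norm (maximum absolute row sum). Conditions (C1): $\epsilon_1>0$, and for $i=2,\dots,n$: $0<\epsilon_i\le |a_{ii}|-h_i(A)$ and $\epsilon_i>\sum_{j=1}^{i-1}\frac{|a_{ij}|\epsilon_j}{|a_{jj}|}$. Conditions (C2): let $k$ be the smallest index such that $a_{kj}=0$ for all $j>k$; $\epsilon_i=0$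 for $i=1,\dots,k-1$, and for $i=k,\dots,n$: $0<\epsilon_i<|a_{ii}|-h_i(A)$ and $\epsilon_i>\sum_{j=k}^{i-1}\frac{|a_{ij}|\epsilon_j}{|a_{jj}|}$ (empty sum for $i=k$). *)

theory Defs
  imports Complex_Main
begin

text \<open>Matrices of size n are represented as functions nat => nat => complex,
  indices 0..n-1 (index i here corresponds to index i+1 of the paper).\<close>

function nekr_h :: "(nat \<Rightarrow> nat \<Rightarrow> complex) \<Rightarrow> nat \<Rightarrow> nat \<Rightarrow> real" where
  "nekr_h A n i =
     (\<Sum>j<i. cmod (A i j) * nekr_h A n j / cmod (A j j))
     + (\<Sum>j\<in>{i<..<n}. cmod (A i j))"
  by auto
termination
  by (relation "measure (\<lambda>(A, n, i). i)") auto

definition nekrasov :: "(nat \<Rightarrow> nat \<Rightarrow> complex) \<Rightarrow> nat \<Rightarrow> bool" where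
  "nekrasov A n \<longleftrightarrow> (\<forall>i<n. A i i \<noteq> 0 \<and> cmod (A i i) > nekr_h A n i)"

definition inf_norm :: "(nat \<Rightarrow> nat \<Rightarrow> complex) \<Rightarrow> nat \<Rightarrow> real" where
  "inf_norm B n = Max ((\<lambda>i. \<Sum>j<n. cmod (B i j)) ` {..<n})"

definition is_inverse :: "(nat \<Rightarrow> nat \<Rightarrow> complex) \<Rightarrow> (nat \<Rightarrow> nat \<Rightarrow> complex) \<Rightarrow> nat \<Rightarrow> bool" where
  "is_inverse A B n \<longleftrightarrow>
     (\<forall>i<n. \<forall>j<n. (\<Sum>k<n. A i k * B k j) = (if i = j then 1 else 0)) \<and>
     (\<forall>i<n. \<forall>j<n. (\<Sum>k<n. B i k * A k j) = (if i = j then 1 else 0))"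

definition cond_C1 :: "(nat \<Rightarrow> nat \<Rightarrow> complex) \<Rightarrow> nat \<Rightarrow> (nat \<Rightarrow> real) \<Rightarrow> bool" where
  "cond_C1 A n \<epsilon> \<longleftrightarrow> \<epsilon> 0 > 0 \<and>
     (\<forall>i. 1 \<le> i \<and> i < n \<longrightarrow>
        0 < \<epsilon> i \<and> \<epsilon> i \<le> cmod (A i i) - nekr_h A n i \<and>
        \<epsilon> i > (\<Sum>j<i. cmod (A i j) * \<epsilon> j / cmod (A j j)))"

definition c2_index :: "(nat \<Rightarrow> nat \<Rightarrow> complex) \<Rightarrow> nat \<Rightarrow> nat" where
  "c2_index A n = (LEAST k. \<forall>j. k < j \<and> j < n \<longrightarrow> A k j = 0)"

definition cond_C2 :: "(nat \<Rightarrow> nat \<Rightarrow> complex) \<Rightarrow> nat \<Rightarrow> (nat \<Rightarrow> real) \<Rightarrow> bool" where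
  "cond_C2 A n \<epsilon> \<longleftrightarrow> (let k = c2_index A n in
     (\<forall>i<k. \<epsilon> i = 0) \<and>
     (\<forall>i. k \<le> i \<and> i < n \<longrightarrow>
        0 < \<epsilon> i \<and> \<epsilon> i < cmod (A i i) - nekr_h A n i \<and>
        \<epsilon> i > (\<Sum>j\<in>{k..<i}. cmod (A i j) * \<epsilon> j / cmod (A j j))))"

definition nekr_w :: "(nat \<Rightarrow> nat \<Rightarrow> complex) \<Rightarrow> nat \<Rightarrow> (nat \<Rightarrow> real) \<Rightarrow> nat \<Rightarrow> real" where
  "nekr_w A n \<epsilon> i = (\<Sum>j<i. cmod (A i j) * \<epsilon> j / cmod (A j j))"

definition nekr_p :: "(nat \<Rightarrow> nat \<Rightarrow> complex) \<Rightarrow> nat \<Rightarrow> (nat \<Rightarrow> real) \<Rightarrow> nat \<Rightarrow> real" where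
  "nekr_p A n \<epsilon> i = (\<Sum>j\<in>{i<..<n}.
      cmod (A i j) * (cmod (A j j) - nekr_h A n j - \<epsilon> j) / cmod (A j j))"

end

theory Submission
  imports Defs "Jordan_Normal_Form.Determinant"
begin

declare nekr_h.simps[simp del]

lemma h_nonneg: "0 \<le> nekr_h A n i"
proof (induction i rule: less_induct)
  case (less i)
  show ?case
    by (subst nekr_h.simps) (auto intro!: sum_nonneg add_nonneg_nonneg divide_nonneg_nonneg mult_nonneg_nonneg less)
qed

lemma sdd_bound:
  fixes A :: "nat \<Rightarrow> nat \<Rightarrow> complex" and d :: "nat \<Rightarrow> real" and x z :: "nat \<Rightarrow> complex"
  assumes n: "0 < n" and dpos: "\<forall>i<n. d i > 0" and b: "b > 0"
    and dd: "\<forall>i<n. b \<le> cmod (A i i) * d i - (\<Sum>j\<in>{..<n}-{i}. cmod (A i j) * d j)"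
    and eq: "\<forall>i<n. (\<Sum>k<n. A i k * x k) = z i"
    and zc: "\<forall>i<n. cmod (z i) \<le> c"
  shows "\<forall>j<n. cmod (x j) \<le> d j * (c / b)"
proof -
  define t where "t = Max ((\<lambda>i. cmod (x i) / d i) ` {..<n})"
  have "t \<in> (\<lambda>i. cmod (x i) / d i) ` {..<n}" unfolding t_def
    using n by (intro Max_in) auto
  then obtain i where i: "i < n" and ti: "t = cmod (x i) / d i" by auto
  have tj: "cmod (x j) \<le> d j * t" if "j < n" for j
  proof -
    have "cmod (x j) / d j \<le> t" unfolding t_def using that by (intro Max_ge) auto
    thus ?thesis using dpos that by (simp add: pos_divide_le_eq mult.commute)
  qed
  have t0: "t \<ge> 0" using ti dpos i by (simp add: divide_nonneg_pos)
  have xi: "cmod (x i) = d i * t" using ti dpos i by (metis less_irrefl nonzero_mult_div_cancel_left times_divide_eq_right)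
  have zi: "z i = A i i * x i + (\<Sum>j\<in>{..<n}-{i}. A i j * x j)"
    using eq i by (simp add: sum.remove[of "{..<n}" i])
  have "cmod (A i i * x i) - cmod (\<Sum>j\<in>{..<n}-{i}. A i j * x j) \<le> cmod (z i)"
    unfolding zi by (rule norm_diff_ineq)
  moreover have "cmod (\<Sum>j\<in>{..<n}-{i}. A i j * x j) \<le> (\<Sum>j\<in>{..<n}-{i}. cmod (A i j) * d j) * t"
  proof -
    have "cmod (\<Sum>j\<in>{..<n}-{i}. A i j * x j) \<le> (\<Sum>j\<in>{..<n}-{i}. cmod (A i j * x j))"
      by (rule norm_sum)
    also have "\<dots> \<le> (\<Sum>j\<in>{..<n}-{i}. cmod (A i j) * d j * t)"
      by (intro sum_mono) (auto simp: norm_mult mult.assoc intro!: mult_left_mono tj)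
    finally show ?thesis by (simp add: sum_distrib_right)
  qed
  ultimately have "(cmod (A i i) * d i - (\<Sum>j\<in>{..<n}-{i}. cmod (A i j) * d j)) * t \<le> cmod (z i)"
    using xi by (simp add: norm_mult left_diff_distrib)
  moreover have "b * t \<le> (cmod (A i i) * d i - (\<Sum>j\<in>{..<n}-{i}. cmod (A i j) * d j)) * t"
    using dd i t0 by (intro mult_right_mono) auto
  ultimately have "b * t \<le> c" using zc i by (meson order_trans)
  hence tc: "t \<le> c / b" using b by (simp add: pos_le_divide_eq mult.commute)
  show ?thesis
  proof (intro allI impI)
    fix j assume j: "j < n"
    have "cmod (x j) \<le> d j * t" by (rule tj[OF j])
    also have "\<dots> \<le> d j * (c / b)" using tc dpos j by (intro mult_left_mono) auto
    finally show "cmod (x j) \<le> d j * (c / b)" .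
  qed
qed

lemma inverse_exists:
  fixes A :: "nat \<Rightarrow> nat \<Rightarrow> complex"
  assumes inj: "\<And>x. \<forall>i<n. (\<Sum>k<n. A i k * x k) = 0 \<Longrightarrow> \<forall>i<n. x i = 0"
  shows "\<exists>B. is_inverse A B n"
proof -
  define M where "M = mat n n (\<lambda>(i,j). A i j)"
  have M: "M \<in> carrier_mat n n" unfolding M_def by simp
  have "det M \<noteq> 0"
  proof
    assume "det M = 0"
    then obtain v where v: "v \<in> carrier_vec n" "v \<noteq> 0\<^sub>v n" "M *\<^sub>v v = 0\<^sub>v n"
      using det_0_iff_vec_prod_zero_field[OF M] by auto
    have "\<forall>i<n. (\<Sum>k<n. A i k * v $ k) = 0"
    proof (intro allI impI)
      fix i assume i: "i < n"
      have "(M *\<^sub>v v) $ i = 0" using v(3) i by simp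
      thus "(\<Sum>k<n. A i k * v $ k) = 0"
        using i v(1) by (simp add: M_def mult_mat_vec_def scalar_prod_def lessThan_atLeast0)
    qed
    from inj[OF this] have "v = 0\<^sub>v n" using v(1) by (intro eq_vecI) auto
    with v(2) show False by simp
  qed
  from det_non_zero_imp_unit[OF M this, of "()"]
  obtain P where P: "P \<in> carrier_mat n n" "P * M = 1\<^sub>m n" "M * P = 1\<^sub>m n"
    unfolding Units_def ring_mat_def by auto
  define B where "B i j = P $$ (i, j)" for i j
  show ?thesis
  proof (intro exI[of _ B])
    show "is_inverse A B n" unfolding is_inverse_def
    proof (intro conjI allI impI)
      fix i j assume i: "i < n" and j: "j < n"
      have "(M * P) $$ (i,j) = 1\<^sub>m n $$ (i,j)" using P by simp
      thus "(\<Sum>k<n. A i k * B k j) = (if i = j then 1 else 0)"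
        using i j P(1) by (simp add: M_def B_def scalar_prod_def lessThan_atLeast0 row_def col_def)
      have "(P * M) $$ (i,j) = 1\<^sub>m n $$ (i,j)" using P by simp
      thus "(\<Sum>k<n. B i k * A k j) = (if i = j then 1 else 0)"
        using i j P(1) by (simp add: M_def B_def scalar_prod_def lessThan_atLeast0 row_def col_def)
    qed
  qed
qed


lemma row_identity:
  fixes A :: "nat \<Rightarrow> nat \<Rightarrow> complex" and \<epsilon> :: "nat \<Rightarrow> real"
  assumes nz: "\<forall>j<n. A j j \<noteq> 0" and i: "i < n"
  defines "d \<equiv> \<lambda>j. (nekr_h A n j + \<epsilon> j) / cmod (A j j)"
  shows "cmod (A i i) * d i - (\<Sum>j\<in>{..<n}-{i}. cmod (A i j) * d j)
         = \<epsilon> i - nekr_w A n \<epsilon> i + nekr_p A n \<epsilon> i"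
proof -
  have split: "{..<n}-{i} = {..<i} \<union> {i<..<n}" using i by auto
  have S: "(\<Sum>j\<in>{..<n}-{i}. cmod (A i j) * d j) =
     (\<Sum>j<i. cmod (A i j) * d j) + (\<Sum>j\<in>{i<..<n}. cmod (A i j) * d j)"
    unfolding split by (rule sum.union_disjoint) auto
  have h: "nekr_h A n i = (\<Sum>j<i. cmod (A i j) * nekr_h A n j / cmod (A j j))
     + (\<Sum>j\<in>{i<..<n}. cmod (A i j))" by (rule nekr_h.simps)
  have S1: "(\<Sum>j<i. cmod (A i j) * d j) = (\<Sum>j<i. cmod (A i j) * nekr_h A n j / cmod (A j j))
       + nekr_w A n \<epsilon> i"
    unfolding nekr_w_def d_def
    by (simp add: sum.distrib[symmetric] distrib_left add_divide_distrib)
  have S2: "(\<Sum>j\<in>{i<..<n}. cmod (A i j) * d j) = (\<Sum>j\<in>{i<..<n}. cmod (A i j)) - nekr_p A n \<epsilon> i"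
    unfolding nekr_p_def sum_subtractf[symmetric]
  proof (rule sum.cong)
    fix j assume "j \<in> {i<..<n}"
    hence "A j j \<noteq> 0" using nz by auto
    thus "cmod (A i j) * d j = cmod (A i j) -
        cmod (A i j) * (cmod (A j j) - nekr_h A n j - \<epsilon> j) / cmod (A j j)"
      unfolding d_def by (simp add: field_simps)
  qed simp
  have D: "cmod (A i i) * d i = nekr_h A n i + \<epsilon> i" using nz i unfolding d_def by simp
  show ?thesis unfolding S S1 S2 D using h by linarith
qed

theorem theorem3p2:
  fixes A :: "nat \<Rightarrow> nat \<Rightarrow> complex" and n :: nat and \<epsilon> :: "nat \<Rightarrow> real"
  assumes "n \<ge> 1"
    and "nekrasov A n"
    and "cond_C1 A n \<epsilon> \<or> cond_C2 A n \<epsilon>"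
  shows "(\<forall>i<n. \<epsilon> i - nekr_w A n \<epsilon> i + nekr_p A n \<epsilon> i > 0) \<and>
         (\<exists>B. is_inverse A B n \<and>
            inf_norm B n \<le>
              Max ((\<lambda>i. (nekr_h A n i + \<epsilon> i) / cmod (A i i)) ` {..<n})
              / Min ((\<lambda>i. \<epsilon> i - nekr_w A n \<epsilon> i + nekr_p A n \<epsilon> i) ` {..<n}))"
proof -
  define \<beta> where "\<beta> i = \<epsilon> i - nekr_w A n \<epsilon> i + nekr_p A n \<epsilon> i" for i
  define d where "d j = (nekr_h A n j + \<epsilon> j) / cmod (A j j)" for j
  have n: "0 < n" using assms(1) by simp
  have nz: "\<forall>j<n. A j j \<noteq> 0" and hl: "\<forall>j<n. nekr_h A n j < cmod (A j j)"
    using assms(2) unfolding nekrasov_def by auto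
  have p_nonneg: "0 \<le> nekr_p A n \<epsilon> i"
    if le: "\<forall>j. i < j \<and> j < n \<longrightarrow> \<epsilon> j \<le> cmod (A j j) - nekr_h A n j" for i
    unfolding nekr_p_def using le
    by (intro sum_nonneg) (auto intro!: divide_nonneg_nonneg mult_nonneg_nonneg)
  have part: "(\<forall>i<n. \<beta> i > 0) \<and> (\<forall>i<n. d i > 0)"
    using assms(3)
  proof
    assume C: "cond_C1 A n \<epsilon>"
    have e0: "\<epsilon> 0 > 0" using C unfolding cond_C1_def by auto
    have le: "\<forall>j. i < j \<and> j < n \<longrightarrow> \<epsilon> j \<le> cmod (A j j) - nekr_h A n j" for i
      using C unfolding cond_C1_def by auto
    have epos: "\<epsilon> j > 0" if "j < n" for j
      using C e0 that unfolding cond_C1_def by (cases "j = 0") auto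
    have b: "\<beta> i > 0" if i: "i < n" for i
    proof (cases "i = 0")
      case True
      thus ?thesis using e0 p_nonneg[OF le, of 0] unfolding \<beta>_def nekr_w_def by simp
    next
      case False
      hence "\<epsilon> i > nekr_w A n \<epsilon> i" using C i unfolding cond_C1_def nekr_w_def by auto
      thus ?thesis using p_nonneg[OF le, of i] unfolding \<beta>_def by simp
    qed
    have "d i > 0" if "i < n" for i
      using epos[OF that] h_nonneg[of A n i] nz that unfolding d_def
      by (intro divide_pos_pos) auto
    thus ?thesis using b by auto
  next
    assume C: "cond_C2 A n \<epsilon>"
    define k where "k = c2_index A n"
    have kP: "\<forall>j. n - 1 < j \<and> j < n \<longrightarrow> A (n-1) j = 0" by auto
    have kn: "k < n" unfolding k_def c2_index_def
      using Least_le[of "\<lambda>k. \<forall>j. k < j \<and> j < n \<longrightarrow> A k j = 0", OF kP] n by linarith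
    have e0: "\<forall>i<k. \<epsilon> i = 0"
      and ek: "\<forall>i. k \<le> i \<and> i < n \<longrightarrow> 0 < \<epsilon> i \<and> \<epsilon> i < cmod (A i i) - nekr_h A n i \<and>
        \<epsilon> i > (\<Sum>j\<in>{k..<i}. cmod (A i j) * \<epsilon> j / cmod (A j j))"
      using C unfolding cond_C2_def k_def Let_def by auto
    have lt: "\<epsilon> j < cmod (A j j) - nekr_h A n j" if "j < n" for j
    proof (cases "j < k")
      case True thus ?thesis using e0 hl that by auto
    next
      case False thus ?thesis using ek that by auto
    qed
    have le: "\<forall>j. i < j \<and> j < n \<longrightarrow> \<epsilon> j \<le> cmod (A j j) - nekr_h A n j" for i
      using lt by (auto simp: less_imp_le)
    have nzrow: "\<exists>j. i < j \<and> j < n \<and> A i j \<noteq> 0" if "i < k" for i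
      using not_less_Least[of i "\<lambda>k. \<forall>j. k < j \<and> j < n \<longrightarrow> A k j = 0"] that
      unfolding k_def c2_index_def by auto
    have Spos: "(\<Sum>j\<in>{i<..<n}. cmod (A i j)) > 0" if ik: "i < k" for i
    proof -
      obtain j where "i < j" "j < n" "A i j \<noteq> 0" using nzrow[OF ik] by auto
      thus ?thesis by (intro sum_pos2[of _ j]) auto
    qed
    have b: "\<beta> i > 0" if i: "i < n" for i
    proof (cases "i < k")
      case True
      have w0: "nekr_w A n \<epsilon> i = 0" unfolding nekr_w_def using e0 True by simp
      obtain j where j: "i < j" "j < n" "A i j \<noteq> 0" using nzrow[OF True] by auto
      have "nekr_p A n \<epsilon> i > 0" unfolding nekr_p_def
        using j lt nz le
        by (intro sum_pos2[of _ j]) (auto intro!: divide_pos_pos mult_pos_pos divide_nonneg_nonneg mult_nonneg_nonneg)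
      thus ?thesis using w0 e0 True unfolding \<beta>_def by simp
    next
      case False
      have split: "{..<i} = {..<k} \<union> {k..<i}" using False by auto
      have "nekr_w A n \<epsilon> i = (\<Sum>j<k. cmod (A i j) * \<epsilon> j / cmod (A j j))
         + (\<Sum>j\<in>{k..<i}. cmod (A i j) * \<epsilon> j / cmod (A j j))"
        unfolding nekr_w_def split by (rule sum.union_disjoint) auto
      also have "(\<Sum>j<k. cmod (A i j) * \<epsilon> j / cmod (A j j)) = 0" using e0 by simp
      finally have "nekr_w A n \<epsilon> i < \<epsilon> i" using ek False i by auto
      thus ?thesis using p_nonneg[OF le, of i] unfolding \<beta>_def by simp
    qed
    have "d i > 0" if i: "i < n" for i
    proof -
      have "nekr_h A n i + \<epsilon> i > 0"
      proof (cases "i < k")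
        case True
        have "nekr_h A n i = (\<Sum>j<i. cmod (A i j) * nekr_h A n j / cmod (A j j))
          + (\<Sum>j\<in>{i<..<n}. cmod (A i j))" by (rule nekr_h.simps)
        moreover have "(\<Sum>j<i. cmod (A i j) * nekr_h A n j / cmod (A j j)) \<ge> 0"
          by (auto intro!: sum_nonneg divide_nonneg_nonneg mult_nonneg_nonneg h_nonneg)
        ultimately show ?thesis using Spos[OF True] e0 True by simp
      next
        case False
        hence "0 < \<epsilon> i" using ek i by auto
        thus ?thesis using h_nonneg[of A n i] by linarith
      qed
      thus ?thesis using nz i unfolding d_def by (intro divide_pos_pos) auto
    qed
    thus ?thesis using b by auto
  qed
  have bpos: "\<forall>i<n. \<beta> i > 0" and dpos: "\<forall>i<n. d i > 0" using part by auto
  define bm where "bm = Min (\<beta> ` {..<n})"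
  have bm: "bm > 0" unfolding bm_def using n bpos by (subst Min_gr_iff) auto
  have bmle: "bm \<le> \<beta> i" if "i < n" for i unfolding bm_def using that by (intro Min_le) auto
  have rid: "cmod (A i i) * d i - (\<Sum>j\<in>{..<n}-{i}. cmod (A i j) * d j) = \<beta> i" if i: "i < n" for i
    unfolding d_def \<beta>_def by (rule row_identity[where A=A and n=n and \<epsilon>=\<epsilon>, OF nz i])
  have dd: "\<forall>i<n. bm \<le> cmod (A i i) * d i - (\<Sum>j\<in>{..<n}-{i}. cmod (A i j) * d j)"
    using rid bmle by simp
  have inj: "\<forall>i<n. x i = 0" if "\<forall>i<n. (\<Sum>k<n. A i k * x k) = 0" for x
  proof -
    have "\<forall>j<n. cmod (x j) \<le> d j * (0 / bm)"
      by (rule sdd_bound[OF n dpos bm dd, of x "\<lambda>_. 0"]) (use that in auto)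
    thus ?thesis by auto
  qed
  obtain B where B: "is_inverse A B n" using inverse_exists[OF inj] by blast
  have rowb: "(\<Sum>j<n. cmod (B i j)) \<le> Max (d ` {..<n}) / bm" if i: "i < n" for i
  proof -
    define z where "z k = cnj (B i k) / of_real (cmod (B i k))" for k
    define x where "x l = (\<Sum>k<n. B l k * z k)" for l
    have zc: "cmod (z k) \<le> 1" for k
      unfolding z_def by (cases "B i k = 0") (auto simp: norm_divide)
    have eq: "\<forall>j<n. (\<Sum>m<n. A j m * x m) = z j"
    proof (intro allI impI)
      fix j assume j: "j < n"
      have "(\<Sum>m<n. A j m * x m) = (\<Sum>k<n. (\<Sum>m<n. A j m * B m k) * z k)"
      proof -
        have "(\<Sum>m<n. A j m * x m) = (\<Sum>m<n. \<Sum>k<n. A j m * (B m k * z k))"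
          unfolding x_def by (simp add: sum_distrib_left)
        also have "\<dots> = (\<Sum>k<n. \<Sum>m<n. A j m * (B m k * z k))" by (rule sum.swap)
        also have "\<dots> = (\<Sum>k<n. (\<Sum>m<n. A j m * B m k) * z k)"
          by (simp add: sum_distrib_right mult.assoc)
        finally show ?thesis .
      qed
      also have "\<dots> = (\<Sum>k<n. (if j = k then 1 else 0) * z k)"
        using B j unfolding is_inverse_def by (intro sum.cong) auto
      also have "\<dots> = (\<Sum>k<n. if j = k then z k else 0)" by (rule sum.cong) auto
      also have "\<dots> = z j" using j by simp
      finally show "(\<Sum>m<n. A j m * x m) = z j" .
    qed
    have xi: "x i = of_real (\<Sum>k<n. cmod (B i k))"
      unfolding x_def of_real_sum
    proof (rule sum.cong)
      fix k
      show "B i k * z k = of_real (cmod (B i k))"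
      proof (cases "B i k = 0")
        case False
        have "B i k * cnj (B i k) = of_real (cmod (B i k))^2" using complex_norm_square[of "B i k"] by simp
        thus ?thesis using False unfolding z_def by (simp add: power2_eq_square field_simps)
      qed (simp add: z_def)
    qed simp
    have "cmod (x i) \<le> d i * (1 / bm)"
      using sdd_bound[OF n dpos bm dd eq, of 1] zc i by auto
    moreover have "cmod (x i) = (\<Sum>k<n. cmod (B i k))" unfolding xi norm_of_real
      by (rule abs_of_nonneg, rule sum_nonneg, simp)
    ultimately have "(\<Sum>k<n. cmod (B i k)) \<le> d i / bm" by simp
    also have "\<dots> \<le> Max (d ` {..<n}) / bm"
      using bm i by (intro divide_right_mono Max_ge) auto
    finally show ?thesis .
  qed
  have "inf_norm B n \<le> Max (d ` {..<n}) / bm"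
    unfolding inf_norm_def using n rowb by (subst Max_le_iff) (auto simp del: Max_le_iff)
  moreover have "d = (\<lambda>i. (nekr_h A n i + \<epsilon> i) / cmod (A i i))" by (rule ext) (simp add: d_def)
  moreover have "\<beta> = (\<lambda>i. \<epsilon> i - nekr_w A n \<epsilon> i + nekr_p A n \<epsilon> i)" by (rule ext) (simp add: \<beta>_def)
  ultimately show ?thesis using bpos B unfolding bm_def by blast
qed

end
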